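(* Let $G=(V,E)$ with colouring $f$ satisfy $|B|>|R|$. Let $E^*$ be the set of pairs $\{u,v\}\notin E$ ($u\neq v$) with at least one of $u,v$ blue. Define $b^*(v)=\max(r(v)-b(v),0)$ for $v\in R$ and $b^*(v)=b(v)-r(v)$ for $v\in B$. Consider the integer program (IP-1a) in variables $y_e$, $e\in E^*$: maximize $-\sum_{e\in E^*}y_e$ subject to $\sum_{u\in N_{E^*}(v)\cap B}y_{uv}=b^*(v)$ for all $v\in R$; $-\sum_{u\in N_{E^*}(v)\cap B}y_{uv}+\sum_{u\in N_{E^*}(v)\cap R}y_{uv}\le b^*(v)$ for all $v\in B$; $y_e\in\{0,1\}$ for all $e\in E^*$. Then a set $Y\subseteq E^*$ has indicator vector optimal for (IP-1a) if and only if $E\cup Y$ is an optimal solution to the MIAE problem on $(G,f)$; moreover every optimal MIAE solution $E'$ satisfies $E'\setminus E\subseteq E^*$, and the optimal value of (IP-1a) equals $-\min|E'\setminus E|$ over MIAE-feasible $E'$.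
   Context: Graphs are finite, simple and undirected; $B,R$ are the blue and red nodes under $f:V\to\{B,R\}$; $b(v),r(v)$ are the numbers of blue and red neighbours of $v$ in $G$; $N_{E^*}(v)=\{u:\{u,v\}\in E^*\}$. A node is under illusion in $(V,E')$ if it has strictly more red than blue neighbours there. An optimal solution to MIAE is an edge set $E'\supseteq E$ on $V$ such that no node is under illusion in $(V,E')$ and $|E'\setminus E|$ is minimum among all such sets. *)

theory Defs
  imports Main
begin

datatype colour = Blue | Red

definition edges_on :: "'a set \<Rightarrow> 'a set set \<Rightarrow> bool" where
  "edges_on V F \<longleftrightarrow> (\<forall>e\<in>F. \<exists>u v. e = {u, v} \<and> u \<noteq> v \<and> u \<in> V \<and> v \<in> V)"

definition simple_graph :: "'a set \<Rightarrow> 'a set set \<Rightarrow> bool" where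
  "simple_graph V E \<longleftrightarrow> finite V \<and> edges_on V E"

definition blues :: "'a set \<Rightarrow> ('a \<Rightarrow> colour) \<Rightarrow> 'a set" where
  "blues V f = {v \<in> V. f v = Blue}"

definition reds :: "'a set \<Rightarrow> ('a \<Rightarrow> colour) \<Rightarrow> 'a set" where
  "reds V f = {v \<in> V. f v = Red}"

definition nbrs :: "'a set set \<Rightarrow> 'a \<Rightarrow> 'a set" where
  "nbrs F v = {u. {u, v} \<in> F}"

definition blue_deg :: "('a \<Rightarrow> colour) \<Rightarrow> 'a set set \<Rightarrow> 'a \<Rightarrow> nat" where
  "blue_deg f F v = card {u \<in> nbrs F v. f u = Blue}"

definition red_deg :: "('a \<Rightarrow> colour) \<Rightarrow> 'a set set \<Rightarrow> 'a \<Rightarrow> nat" where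
  "red_deg f F v = card {u \<in> nbrs F v. f u = Red}"

definition under_illusion :: "('a \<Rightarrow> colour) \<Rightarrow> 'a set set \<Rightarrow> 'a \<Rightarrow> bool" where
  "under_illusion f F v \<longleftrightarrow> red_deg f F v > blue_deg f F v"

definition miae_feasible :: "'a set \<Rightarrow> 'a set set \<Rightarrow> ('a \<Rightarrow> colour) \<Rightarrow> 'a set set \<Rightarrow> bool" where
  "miae_feasible V E f E' \<longleftrightarrow> E \<subseteq> E' \<and> edges_on V E' \<and> (\<forall>v\<in>V. \<not> under_illusion f E' v)"

definition miae_optimal :: "'a set \<Rightarrow> 'a set set \<Rightarrow> ('a \<Rightarrow> colour) \<Rightarrow> 'a set set \<Rightarrow> bool" where
  "miae_optimal V E f E' \<longleftrightarrow> miae_feasible V E f E' \<and>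
     (\<forall>E''. miae_feasible V E f E'' \<longrightarrow> card (E' - E) \<le> card (E'' - E))"

definition Estar :: "'a set \<Rightarrow> 'a set set \<Rightarrow> ('a \<Rightarrow> colour) \<Rightarrow> 'a set set" where
  "Estar V E f = {{u, v} | u v. u \<in> V \<and> v \<in> V \<and> u \<noteq> v \<and> {u, v} \<notin> E \<and> (f u = Blue \<or> f v = Blue)}"

definition bstar :: "'a set set \<Rightarrow> ('a \<Rightarrow> colour) \<Rightarrow> 'a \<Rightarrow> int" where
  "bstar E f v = (if f v = Red
      then max (int (red_deg f E v) - int (blue_deg f E v)) 0
      else int (blue_deg f E v) - int (red_deg f E v))"

text \<open>(IP-1a): variables y_e for e in E* (values outside E* are irrelevant).\<close>
definition ip_feasible :: "'a set \<Rightarrow> 'a set set \<Rightarrow> ('a \<Rightarrow> colour) \<Rightarrow> ('a set \<Rightarrow> int) \<Rightarrow> bool" where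
  "ip_feasible V E f y \<longleftrightarrow>
     (\<forall>v\<in>reds V f.
        (\<Sum>u\<in>nbrs (Estar V E f) v \<inter> blues V f. y {u, v}) = bstar E f v) \<and>
     (\<forall>v\<in>blues V f.
        - (\<Sum>u\<in>nbrs (Estar V E f) v \<inter> blues V f. y {u, v})
        + (\<Sum>u\<in>nbrs (Estar V E f) v \<inter> reds V f. y {u, v}) \<le> bstar E f v) \<and>
     (\<forall>e\<in>Estar V E f. y e \<in> {0, 1})"

definition ip_objective :: "'a set \<Rightarrow> 'a set set \<Rightarrow> ('a \<Rightarrow> colour) \<Rightarrow> ('a set \<Rightarrow> int) \<Rightarrow> int" where
  "ip_objective V E f y = - (\<Sum>e\<in>Estar V E f. y e)"

definition ip_optimal :: "'a set \<Rightarrow> 'a set set \<Rightarrow> ('a \<Rightarrow> colour) \<Rightarrow> ('a set \<Rightarrow> int) \<Rightarrow> bool" where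
  "ip_optimal V E f y \<longleftrightarrow> ip_feasible V E f y \<and>
     (\<forall>y'. ip_feasible V E f y' \<longrightarrow> ip_objective V E f y' \<le> ip_objective V E f y)"

definition indic :: "'a set set \<Rightarrow> 'a set \<Rightarrow> int" where
  "indic Y e = (if e \<in> Y then 1 else 0)"

end

theory Submission imports Defs begin

definition kcol :: "('a \<Rightarrow> colour) \<Rightarrow> 'a set set \<Rightarrow> colour \<Rightarrow> 'a \<Rightarrow> nat" where
  "kcol f F c v = card {u \<in> nbrs F v. f u = c}"

lemma bd: "blue_deg f F v = kcol f F Blue v" by (simp add: blue_deg_def kcol_def)
lemma rd: "red_deg f F v = kcol f F Red v" by (simp add: red_deg_def kcol_def)

lemma nbrs_sub: "edges_on V F \<Longrightarrow> nbrs F v \<subseteq> V"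
  unfolding edges_on_def nbrs_def by (auto simp: doubleton_eq_iff)

lemma edges_Pow: "edges_on V F \<Longrightarrow> F \<subseteq> Pow V"
  unfolding edges_on_def by auto

lemma edges_fin: "finite V \<Longrightarrow> edges_on V F \<Longrightarrow> finite F"
  using edges_Pow finite_Pow_iff finite_subset by metis

lemma Estar_edges: "edges_on V (Estar V E f)"
  unfolding edges_on_def Estar_def by auto

lemma Estar_disj: "Estar V E f \<inter> E = {}"
  unfolding Estar_def by auto

lemma edges_Un: "edges_on V A \<Longrightarrow> edges_on V B \<Longrightarrow> edges_on V (A \<union> B)"
  unfolding edges_on_def by blast

lemma edges_mono: "edges_on V A \<Longrightarrow> B \<subseteq> A \<Longrightarrow> edges_on V B"
  unfolding edges_on_def by blast

lemma kcol_fin: "finite V \<Longrightarrow> edges_on V F \<Longrightarrow> finite {u \<in> nbrs F v. f u = c}"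
  using nbrs_sub[of V F v] finite_subset by (metis (no_types, lifting) mem_Collect_eq subsetI subset_eq)

lemma kcol_Un:
  assumes "finite V" "edges_on V E" "edges_on V Y" "Y \<inter> E = {}"
  shows "kcol f (E \<union> Y) c v = kcol f E c v + kcol f Y c v"
proof -
  have A: "{u \<in> nbrs (E \<union> Y) v. f u = c} = {u \<in> nbrs E v. f u = c} \<union> {u \<in> nbrs Y v. f u = c}"
    by (auto simp: nbrs_def)
  have B: "{u \<in> nbrs E v. f u = c} \<inter> {u \<in> nbrs Y v. f u = c} = {}"
    using assms(4) by (auto simp: nbrs_def)
  show ?thesis unfolding kcol_def A
    by (rule card_Un_disjoint[OF kcol_fin[OF assms(1,2)] kcol_fin[OF assms(1,3)] B])
qed

lemma kcol_mono:
  assumes "finite V" "edges_on V F'" "F \<subseteq> F'"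
  shows "kcol f F c v \<le> kcol f F' c v"
  unfolding kcol_def
  by (rule card_mono[OF kcol_fin[OF assms(1,2)]]) (use assms(3) in \<open>auto simp: nbrs_def\<close>)

lemma red_Y_empty:
  assumes "Y \<subseteq> Estar V E f" "f v = Red"
  shows "kcol f Y Red v = 0"
proof -
  have "{u \<in> nbrs Y v. f u = Red} = {}"
  proof (rule ccontr)
    assume "{u \<in> nbrs Y v. f u = Red} \<noteq> {}"
    then obtain x where x: "{x, v} \<in> Y" "f x = Red" by (auto simp: nbrs_def)
    then obtain a b where "{x, v} = {a, b}" "f a = Blue \<or> f b = Blue"
      using assms(1) unfolding Estar_def by blast
    then show False using x(2) assms(2) by (auto simp: doubleton_eq_iff)
  qed
  thus ?thesis unfolding kcol_def by (metis card.empty)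
qed

lemma sum_indic:
  assumes "finite V" "Y \<subseteq> Estar V E f"
  shows "(\<Sum>u\<in>nbrs (Estar V E f) v \<inter> blues V f. indic Y {u, v}) = int (kcol f Y Blue v)"
    and "(\<Sum>u\<in>nbrs (Estar V E f) v \<inter> reds V f. indic Y {u, v}) = int (kcol f Y Red v)"
proof -
  have fin: "finite (nbrs (Estar V E f) v)" using nbrs_sub[OF Estar_edges] assms(1) finite_subset by metis
  have nsub: "nbrs (Estar V E f) v \<subseteq> V" using nbrs_sub[OF Estar_edges] .
  have ny: "nbrs Y v \<subseteq> nbrs (Estar V E f) v" using assms(2) by (auto simp: nbrs_def)
  have "(\<Sum>u\<in>nbrs (Estar V E f) v \<inter> blues V f. indic Y {u, v})
     = (\<Sum>u\<in>{u\<in>nbrs (Estar V E f) v \<inter> blues V f. {u,v} \<in> Y}. 1)"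
    by (subst sum.inter_filter) (use fin in \<open>auto simp: indic_def\<close>)
  also have "{u\<in>nbrs (Estar V E f) v \<inter> blues V f. {u,v} \<in> Y} = {u \<in> nbrs Y v. f u = Blue}"
    using ny nsub by (auto simp: nbrs_def blues_def)
  finally show "(\<Sum>u\<in>nbrs (Estar V E f) v \<inter> blues V f. indic Y {u, v}) = int (kcol f Y Blue v)"
    by (simp add: kcol_def)
  have "(\<Sum>u\<in>nbrs (Estar V E f) v \<inter> reds V f. indic Y {u, v})
     = (\<Sum>u\<in>{u\<in>nbrs (Estar V E f) v \<inter> reds V f. {u,v} \<in> Y}. 1)"
    by (subst sum.inter_filter) (use fin in \<open>auto simp: indic_def\<close>)
  also have "{u\<in>nbrs (Estar V E f) v \<inter> reds V f. {u,v} \<in> Y} = {u \<in> nbrs Y v. f u = Red}"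
    using ny nsub by (auto simp: nbrs_def reds_def)
  finally show "(\<Sum>u\<in>nbrs (Estar V E f) v \<inter> reds V f. indic Y {u, v}) = int (kcol f Y Red v)"
    by (simp add: kcol_def)
qed

lemma ip_char:
  assumes "finite V" "Y \<subseteq> Estar V E f"
  shows "ip_feasible V E f (indic Y) \<longleftrightarrow>
    (\<forall>v\<in>V. f v = Red \<longrightarrow> int (kcol f Y Blue v) = bstar E f v) \<and>
    (\<forall>v\<in>V. f v = Blue \<longrightarrow> - int (kcol f Y Blue v) + int (kcol f Y Red v) \<le> bstar E f v)"
  unfolding ip_feasible_def sum_indic[OF assms]
  by (auto simp: reds_def blues_def indic_def)

lemma miae_char:
  assumes "simple_graph V E" "Y \<subseteq> Estar V E f"
  shows "miae_feasible V E f (E \<union> Y) \<longleftrightarrow>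
    (\<forall>v\<in>V. f v = Red \<longrightarrow> kcol f E Red v \<le> kcol f E Blue v + kcol f Y Blue v) \<and>
    (\<forall>v\<in>V. f v = Blue \<longrightarrow> kcol f E Red v + kcol f Y Red v \<le> kcol f E Blue v + kcol f Y Blue v)"
proof -
  have fV: "finite V" and eE: "edges_on V E" using assms(1) by (auto simp: simple_graph_def)
  have eY: "edges_on V Y" using edges_mono[OF Estar_edges assms(2)] .
  have dj: "Y \<inter> E = {}" using Estar_disj assms(2) by blast
  have eU: "edges_on V (E \<union> Y)" using edges_Un[OF eE eY] .
  have "\<forall>v. f v = Blue \<or> f v = Red" by (metis colour.exhaust)
  then show ?thesis
    unfolding miae_feasible_def under_illusion_def bd rd kcol_Un[OF fV eE eY dj]
    using eU red_Y_empty[OF assms(2)] by (auto simp: not_less)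
qed

lemma reduction:
  assumes sg: "simple_graph V E" and fe: "miae_feasible V E f E''"
  shows "\<exists>Y. Y \<subseteq> (E'' - E) \<inter> Estar V E f \<and> ip_feasible V E f (indic Y)"
proof -
  let ?S = "(E'' - E) \<inter> Estar V E f"
  have fV: "finite V" and eE: "edges_on V E" using sg by (auto simp: simple_graph_def)
  have eE'': "edges_on V E''" using fe by (auto simp: miae_feasible_def)
  have S_sub: "?S \<subseteq> Estar V E f" by blast
  have eU: "edges_on V (E \<union> ?S)" using edges_Un[OF eE edges_mono[OF Estar_edges S_sub]] .
  have sub: "E \<union> ?S \<subseteq> E''" using fe by (auto simp: miae_feasible_def)
  have "miae_feasible V E f (E \<union> ?S)"
    unfolding miae_feasible_def
  proof (intro conjI ballI)
    show "E \<subseteq> E \<union> ?S" by blast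
    show "edges_on V (E \<union> ?S)" by (rule eU)
    fix v assume v: "v \<in> V"
    have "{u \<in> nbrs E'' v. f u = Blue} \<subseteq> {u \<in> nbrs (E \<union> ?S) v. f u = Blue}"
    proof
      fix u assume "u \<in> {u \<in> nbrs E'' v. f u = Blue}"
      hence u: "{u,v} \<in> E''" "f u = Blue" by (auto simp: nbrs_def)
      then obtain a b where "{u,v} = {a,b}" "a \<noteq> b" "a \<in> V" "b \<in> V"
        using eE'' unfolding edges_on_def by blast
      hence uv: "u \<in> V" "v \<in> V" "u \<noteq> v" by (auto simp: doubleton_eq_iff)
      show "u \<in> {u \<in> nbrs (E \<union> ?S) v. f u = Blue}"
      proof (cases "{u,v} \<in> E")
        case True thus ?thesis using u by (auto simp: nbrs_def)
      next
        case False
        hence "{u,v} \<in> Estar V E f" unfolding Estar_def using uv u(2) by blast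
        thus ?thesis using u False by (auto simp: nbrs_def)
      qed
    qed
    hence "blue_deg f E'' v \<le> blue_deg f (E \<union> ?S) v"
      unfolding blue_deg_def by (rule card_mono[OF kcol_fin[OF fV eU]])
    moreover have "red_deg f (E \<union> ?S) v \<le> red_deg f E'' v"
      unfolding rd by (rule kcol_mono[OF fV eE'' sub])
    moreover have "\<not> under_illusion f E'' v" using fe v by (auto simp: miae_feasible_def)
    ultimately show "\<not> under_illusion f (E \<union> ?S) v" unfolding under_illusion_def by linarith
  qed
  then have "\<exists>Y. (Y \<subseteq> ?S \<and> miae_feasible V E f (E \<union> Y)) \<and>
    (\<forall>Y'. Y' \<subseteq> ?S \<and> miae_feasible V E f (E \<union> Y') \<longrightarrow> card Y \<le> card Y')"
    by (intro ex_has_least_nat[of "\<lambda>Y. Y \<subseteq> ?S \<and> miae_feasible V E f (E \<union> Y)" ?S card]) simp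
  then obtain Y where Y: "Y \<subseteq> ?S" "miae_feasible V E f (E \<union> Y)"
    "\<forall>Y'. Y' \<subseteq> ?S \<and> miae_feasible V E f (E \<union> Y') \<longrightarrow> card Y \<le> card Y'"
    by auto
  have YS: "Y \<subseteq> Estar V E f" using Y(1) by blast
  have finY: "finite Y" using edges_fin[OF fV edges_mono[OF Estar_edges YS]] .
  have eY: "edges_on V Y" using edges_mono[OF Estar_edges YS] .
  have ch: "(\<forall>v\<in>V. f v = Red \<longrightarrow> kcol f E Red v \<le> kcol f E Blue v + kcol f Y Blue v) \<and>
    (\<forall>v\<in>V. f v = Blue \<longrightarrow> kcol f E Red v + kcol f Y Red v \<le> kcol f E Blue v + kcol f Y Blue v)"
    using iffD1[OF miae_char[OF sg YS] Y(2)] .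
  have red: "\<forall>v\<in>V. f v = Red \<longrightarrow> int (kcol f Y Blue v) = bstar E f v"
  proof (intro ballI impI)
    fix v assume v: "v \<in> V" "f v = Red"
    have ge: "kcol f E Red v \<le> kcol f E Blue v + kcol f Y Blue v" using ch v by blast
    show "int (kcol f Y Blue v) = bstar E f v"
    proof (rule ccontr)
      assume ne: "int (kcol f Y Blue v) \<noteq> bstar E f v"
      have gt: "int (kcol f Y Blue v) > max (int (kcol f E Red v) - int (kcol f E Blue v)) 0"
        using ne ge v by (auto simp: bstar_def rd bd)
      then have "kcol f Y Blue v > 0" by linarith
      then have "{u \<in> nbrs Y v. f u = Blue} \<noteq> {}" unfolding kcol_def by (metis card.empty less_irrefl)
      then obtain u where u: "{u,v} \<in> Y" "f u = Blue" by (auto simp: nbrs_def)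
      have uv: "u \<noteq> v" using u v by auto
      define Y' where "Y' = Y - {{u,v}}"
      have Y'S: "Y' \<subseteq> ?S" using Y(1) by (auto simp: Y'_def)
      have Y'E: "Y' \<subseteq> Estar V E f" using YS by (auto simp: Y'_def)
      have cardY': "card Y' < card Y" unfolding Y'_def by (rule card_Diff1_less[OF finY u(1)])
      have nb: "\<And>w. nbrs Y' w = nbrs Y w - {x. {x,w} = {u,v}}" by (auto simp: nbrs_def Y'_def)
      have kc: "\<And>w c. kcol f Y' c w = card ({x\<in>nbrs Y w. f x = c} - {x. {x,w} = {u,v}})"
        unfolding kcol_def nb by (rule arg_cong[where f=card]) auto
      have "miae_feasible V E f (E \<union> Y')"
        unfolding miae_char[OF sg Y'E]
      proof (intro conjI ballI impI)
        fix w assume w: "w \<in> V" "f w = Red"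
        show "kcol f E Red w \<le> kcol f E Blue w + kcol f Y' Blue w"
        proof (cases "w = v")
          case True
          have "{x. {x,v} = {u,v}} = {u}" using uv by (auto simp: doubleton_eq_iff)
          moreover have "u \<in> {x\<in>nbrs Y v. f x = Blue}" using u by (auto simp: nbrs_def)
          ultimately have A: "kcol f Y' Blue v = card ({x\<in>nbrs Y v. f x = Blue} - {u})"
            and uA: "u \<in> {x\<in>nbrs Y v. f x = Blue}"
            using kc[of Blue v] by simp_all
          have fA: "finite {x\<in>nbrs Y v. f x = Blue}" by (rule kcol_fin[OF fV eY])
          have "card {x\<in>nbrs Y v. f x = Blue} > 0" using fA uA card_gt_0_iff by blast
          then have "kcol f Y' Blue v + 1 = kcol f Y Blue v"
            using A card_Diff_singleton[OF uA] by (simp add: kcol_def)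
          moreover have "int (kcol f E Red v) - int (kcol f E Blue v) < int (kcol f Y Blue v)"
            using gt by simp
          ultimately show ?thesis unfolding True by linarith
        next
          case False
          then have "{x\<in>nbrs Y w. f x = Blue} \<inter> {x. {x,w} = {u,v}} = {}"
            using w u v uv by (auto simp: doubleton_eq_iff)
          then have "kcol f Y' Blue w = kcol f Y Blue w" using kc[of Blue w]
            by (simp add: kcol_def Diff_triv)
          then show ?thesis using ch w by auto
        qed
      next
        fix w assume w: "w \<in> V" "f w = Blue"
        have "{x\<in>nbrs Y w. f x = Blue} \<inter> {x. {x,w} = {u,v}} = {}"
          using w u v uv by (auto simp: doubleton_eq_iff)
        then have b: "kcol f Y' Blue w = kcol f Y Blue w" using kc[of Blue w]
          by (simp add: kcol_def Diff_triv)
        have r: "kcol f Y' Red w \<le> kcol f Y Red w" using kc[of Red w]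
          kcol_fin[OF fV eY, of w f Red] unfolding kcol_def by (simp add: card_mono)
        show "kcol f E Red w + kcol f Y' Red w \<le> kcol f E Blue w + kcol f Y' Blue w"
          using ch w b r by fastforce
      qed
      then have "card Y \<le> card Y'" using Y(3) Y'S by blast
      thus False using cardY' by simp
    qed
  qed
  have blue: "\<forall>v\<in>V. f v = Blue \<longrightarrow> - int (kcol f Y Blue v) + int (kcol f Y Red v) \<le> bstar E f v"
  proof (intro ballI impI)
    fix v assume v: "v \<in> V" "f v = Blue"
    have "kcol f E Red v + kcol f Y Red v \<le> kcol f E Blue v + kcol f Y Blue v" using ch v by blast
    then show "- int (kcol f Y Blue v) + int (kcol f Y Red v) \<le> bstar E f v"
      using v by (simp add: bstar_def rd bd)
  qed
  have ipY: "ip_feasible V E f (indic Y)" unfolding ip_char[OF fV YS] using red blue by (rule conjI)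
  show ?thesis using ipY Y(1) by blast
qed

lemma agree:
  assumes "\<forall>e\<in>Estar V E f. y e = y' e"
  shows "ip_feasible V E f y = ip_feasible V E f y' \<and> ip_objective V E f y = ip_objective V E f y'"
proof -
  have s: "\<And>v X. (\<Sum>u\<in>nbrs (Estar V E f) v \<inter> X. y {u,v}) = (\<Sum>u\<in>nbrs (Estar V E f) v \<inter> X. y' {u,v})"
    by (rule sum.cong) (use assms in \<open>auto simp: nbrs_def\<close>)
  have o: "(\<Sum>e\<in>Estar V E f. y e) = (\<Sum>e\<in>Estar V E f. y' e)"
    by (rule sum.cong) (use assms in auto)
  show ?thesis using assms by (simp add: ip_feasible_def ip_objective_def s o)
qed

lemma obj_indic:
  assumes "finite V" "Y \<subseteq> Estar V E f"
  shows "ip_objective V E f (indic Y) = - int (card Y)"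
proof -
  have fin: "finite (Estar V E f)" using edges_fin[OF assms(1) Estar_edges] .
  have "(\<Sum>e\<in>Estar V E f. indic Y e) = (\<Sum>e\<in>{e\<in>Estar V E f. e \<in> Y}. 1)"
    by (subst sum.inter_filter) (use fin in \<open>auto simp: indic_def\<close>)
  also have "{e\<in>Estar V E f. e \<in> Y} = Y" using assms by auto
  finally show ?thesis by (simp add: ip_objective_def)
qed

lemma nbrs_ne: "edges_on V F \<Longrightarrow> u \<in> nbrs F v \<Longrightarrow> u \<noteq> v \<and> u \<in> V \<and> v \<in> V"
  unfolding edges_on_def nbrs_def by (auto simp: doubleton_eq_iff)

lemma full_feasible:
  assumes sg: "simple_graph V E" and card: "card (blues V f) > card (reds V f)"
  shows "miae_feasible V E f (E \<union> Estar V E f)"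
proof -
  have fV: "finite V" and eE: "edges_on V E" using sg by (auto simp: simple_graph_def)
  have eU: "edges_on V (E \<union> Estar V E f)" using edges_Un[OF eE Estar_edges] .
  show ?thesis unfolding miae_feasible_def
  proof (intro conjI ballI)
    show "E \<subseteq> E \<union> Estar V E f" by blast
    show "edges_on V (E \<union> Estar V E f)" by (rule eU)
    fix v assume v: "v \<in> V"
    have Bn: "{u\<in>nbrs (E \<union> Estar V E f) v. f u = Blue} = blues V f - {v}"
    proof
      show "{u\<in>nbrs (E \<union> Estar V E f) v. f u = Blue} \<subseteq> blues V f - {v}"
        using nbrs_ne[OF eU] by (auto simp: blues_def)
      show "blues V f - {v} \<subseteq> {u\<in>nbrs (E \<union> Estar V E f) v. f u = Blue}"
      proof
        fix u assume u: "u \<in> blues V f - {v}"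
        hence uu: "u \<in> V" "f u = Blue" "u \<noteq> v" by (auto simp: blues_def)
        have "{u,v} \<in> E \<union> Estar V E f" unfolding Estar_def using uu v by blast
        thus "u \<in> {u\<in>nbrs (E \<union> Estar V E f) v. f u = Blue}" using uu by (auto simp: nbrs_def)
      qed
    qed
    have Rn: "{u\<in>nbrs (E \<union> Estar V E f) v. f u = Red} \<subseteq> reds V f - {v}"
      using nbrs_ne[OF eU] by (auto simp: reds_def)
    have fB: "finite (blues V f)" and fR: "finite (reds V f)" using fV by (auto simp: blues_def reds_def)
    have "red_deg f (E \<union> Estar V E f) v \<le> card (reds V f - {v})"
      unfolding red_deg_def using Rn fR by (simp add: card_mono)
    moreover have "blue_deg f (E \<union> Estar V E f) v = card (blues V f - {v})"
      unfolding blue_deg_def Bn ..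
    moreover have "card (reds V f - {v}) \<le> card (blues V f - {v})"
    proof (cases "v \<in> blues V f")
      case True
      hence "v \<notin> reds V f" by (auto simp: blues_def reds_def)
      thus ?thesis using True card fB by (simp add: card_Diff_singleton_if)
    next
      case False
      have "card (reds V f - {v}) \<le> card (reds V f)" by (rule card_Diff1_le)
      moreover have "card (blues V f - {v}) = card (blues V f)" using False by simp
      ultimately show ?thesis using card by linarith
    qed
    ultimately show "\<not> under_illusion f (E \<union> Estar V E f) v"
      unfolding under_illusion_def by linarith
  qed
qed

theorem mainTheorem6:
  fixes V :: "'a set" and E :: "'a set set" and f :: "'a \<Rightarrow> colour"
  assumes "simple_graph V E"
    and "card (blues V f) > card (reds V f)"
  shows "(\<forall>Y. Y \<subseteq> Estar V E f \<longrightarrow>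
            (ip_optimal V E f (indic Y) \<longleftrightarrow> miae_optimal V E f (E \<union> Y)))
       \<and> (\<forall>E'. miae_optimal V E f E' \<longrightarrow> E' - E \<subseteq> Estar V E f)
       \<and> (\<exists>y. ip_optimal V E f y)
       \<and> (\<forall>y. ip_optimal V E f y \<longrightarrow>
            ip_objective V E f y = - int (Min {card (E' - E) | E'. miae_feasible V E f E'}))"
proof -
  let ?S = "Estar V E f"
  have fV: "finite V" and eE: "edges_on V E" using assms(1) by (auto simp: simple_graph_def)
  have finS: "finite ?S" using edges_fin[OF fV Estar_edges] .
  have F1: "miae_feasible V E f (E \<union> Y)" if YS: "Y \<subseteq> ?S" and ip: "ip_feasible V E f (indic Y)" for Y
  proof -
    have h: "(\<forall>v\<in>V. f v = Red \<longrightarrow> int (kcol f Y Blue v) = bstar E f v) \<and>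
      (\<forall>v\<in>V. f v = Blue \<longrightarrow> - int (kcol f Y Blue v) + int (kcol f Y Red v) \<le> bstar E f v)"
      using iffD1[OF ip_char[OF fV YS] ip] .
    show ?thesis unfolding miae_char[OF assms(1) YS]
    proof (intro conjI ballI impI)
      fix v assume v: "v \<in> V" "f v = Red"
      have "int (kcol f Y Blue v) = max (int (kcol f E Red v) - int (kcol f E Blue v)) 0"
        using h v by (simp add: bstar_def rd bd)
      then show "kcol f E Red v \<le> kcol f E Blue v + kcol f Y Blue v"
        by (simp add: max_def split: if_split_asm)
    next
      fix v assume v: "v \<in> V" "f v = Blue"
      have "- int (kcol f Y Blue v) + int (kcol f Y Red v) \<le> int (kcol f E Blue v) - int (kcol f E Red v)"
        using h v by (simp add: bstar_def rd bd)
      then show "kcol f E Red v + kcol f Y Red v \<le> kcol f E Blue v + kcol f Y Blue v"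
        by linarith
    qed
  qed
  have F4: "(E \<union> Y) - E = Y" if "Y \<subseteq> ?S" for Y using that Estar_disj by blast
  have F3: "{e\<in>?S. y e = 1} \<subseteq> ?S \<and> ip_feasible V E f (indic {e\<in>?S. y e = 1})
       \<and> ip_objective V E f y = - int (card {e\<in>?S. y e = 1})"
    if ip: "ip_feasible V E f y" for y
  proof -
    have "\<forall>e\<in>?S. y e = indic {e\<in>?S. y e = 1} e"
      using ip by (auto simp: indic_def ip_feasible_def)
    from agree[OF this] ip obj_indic[OF fV, of "{e\<in>?S. y e = 1}"] show ?thesis by auto
  qed
  have F2: "\<exists>Y. Y \<subseteq> ?S \<and> Y \<subseteq> E'' - E \<and> ip_feasible V E f (indic Y) \<and> card Y \<le> card (E'' - E)"
    if fe: "miae_feasible V E f E''" for E''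
  proof -
    have "finite (E'' - E)" using fe edges_fin[OF fV] by (auto simp: miae_feasible_def)
    moreover obtain Y where "Y \<subseteq> (E'' - E) \<inter> ?S" "ip_feasible V E f (indic Y)"
      using reduction[OF assms(1) fe] by blast
    ultimately show ?thesis using card_mono[of "E'' - E" Y] by blast
  qed
  have P1: "\<forall>Y. Y \<subseteq> ?S \<longrightarrow> (ip_optimal V E f (indic Y) \<longleftrightarrow> miae_optimal V E f (E \<union> Y))"
  proof (intro allI impI iffI)
    fix Y assume YS: "Y \<subseteq> ?S" and opt: "ip_optimal V E f (indic Y)"
    show "miae_optimal V E f (E \<union> Y)" unfolding miae_optimal_def
    proof (intro conjI allI impI)
      show "miae_feasible V E f (E \<union> Y)" using F1 YS opt unfolding ip_optimal_def by blast
      fix E'' assume fe: "miae_feasible V E f E''"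
      obtain Y'' where Y'': "Y'' \<subseteq> ?S" "ip_feasible V E f (indic Y'')" "card Y'' \<le> card (E'' - E)"
        using F2[OF fe] by blast
      have "ip_objective V E f (indic Y'') \<le> ip_objective V E f (indic Y)"
        using opt Y''(2) unfolding ip_optimal_def by blast
      then have "card Y \<le> card Y''" using obj_indic[OF fV YS] obj_indic[OF fV Y''(1)] by simp
      then show "card ((E \<union> Y) - E) \<le> card (E'' - E)" using F4[OF YS] Y''(3) by simp
    qed
  next
    fix Y assume YS: "Y \<subseteq> ?S" and opt: "miae_optimal V E f (E \<union> Y)"
    have fe: "miae_feasible V E f (E \<union> Y)" using opt by (simp add: miae_optimal_def)
    obtain Y'' where Y'': "Y'' \<subseteq> ?S" "Y'' \<subseteq> (E \<union> Y) - E" "ip_feasible V E f (indic Y'')"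
      using F2[OF fe] by blast
    have "card ((E \<union> Y) - E) \<le> card ((E \<union> Y'') - E)" using opt F1[OF Y''(1,3)]
      unfolding miae_optimal_def by blast
    then have "card Y \<le> card Y''" unfolding F4[OF YS] F4[OF Y''(1)] .
    moreover have "finite Y" using finS YS finite_subset by blast
    moreover have "Y'' \<subseteq> Y" using Y''(2) F4[OF YS] by simp
    ultimately have "Y'' = Y" using card_seteq[of Y Y''] by blast
    show "ip_optimal V E f (indic Y)" unfolding ip_optimal_def
    proof (intro conjI allI impI)
      show "ip_feasible V E f (indic Y)" using Y''(3) \<open>Y'' = Y\<close> by simp
      fix y' assume ip': "ip_feasible V E f y'"
      note h = F3[OF ip']
      have "card ((E \<union> Y) - E) \<le> card ((E \<union> {e\<in>?S. y' e = 1}) - E)"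
        using opt F1[of "{e\<in>?S. y' e = 1}"] h unfolding miae_optimal_def by blast
      then have "card Y \<le> card {e\<in>?S. y' e = 1}" unfolding F4[OF YS] F4[of "{e\<in>?S. y' e = 1}", OF conjunct1[OF h]] .
      then show "ip_objective V E f y' \<le> ip_objective V E f (indic Y)"
        using h obj_indic[OF fV YS] by simp
    qed
  qed
  have P2: "\<forall>E'. miae_optimal V E f E' \<longrightarrow> E' - E \<subseteq> ?S"
  proof (intro allI impI)
    fix E' assume opt: "miae_optimal V E f E'"
    have fe: "miae_feasible V E f E'" using opt by (simp add: miae_optimal_def)
    have fin: "finite (E' - E)" using fe edges_fin[OF fV] by (auto simp: miae_feasible_def)
    obtain Y where Y: "Y \<subseteq> ?S" "Y \<subseteq> E' - E" "ip_feasible V E f (indic Y)"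
      using F2[OF fe] by blast
    have "card (E' - E) \<le> card ((E \<union> Y) - E)" using opt F1[OF Y(1,3)]
      unfolding miae_optimal_def by blast
    then have "card (E' - E) \<le> card Y" unfolding F4[OF Y(1)] .
    then have "Y = E' - E" using card_seteq[OF fin Y(2)] by simp
    then show "E' - E \<subseteq> ?S" using Y(1) by simp
  qed
  have P3: "\<exists>y. ip_optimal V E f y"
  proof -
    obtain Y0 where Y0: "Y0 \<subseteq> ?S" "ip_feasible V E f (indic Y0)"
      using F2[OF full_feasible[OF assms]] by blast
    obtain Y where Y: "Y \<subseteq> ?S" "ip_feasible V E f (indic Y)"
      "\<forall>Y'. Y' \<subseteq> ?S \<and> ip_feasible V E f (indic Y') \<longrightarrow> card Y \<le> card Y'"
      using ex_has_least_nat[of "\<lambda>Y. Y \<subseteq> ?S \<and> ip_feasible V E f (indic Y)" Y0 card] Y0 by blast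
    have "ip_optimal V E f (indic Y)" unfolding ip_optimal_def
    proof (intro conjI allI impI)
      show "ip_feasible V E f (indic Y)" by (rule Y(2))
      fix y' assume ip': "ip_feasible V E f y'"
      note h = F3[OF ip']
      have "card Y \<le> card {e\<in>?S. y' e = 1}" using Y(3) h by blast
      then show "ip_objective V E f y' \<le> ip_objective V E f (indic Y)"
        using h obj_indic[OF fV Y(1)] by simp
    qed
    then show ?thesis by blast
  qed
  have P4: "\<forall>y. ip_optimal V E f y \<longrightarrow>
            ip_objective V E f y = - int (Min {card (E' - E) | E'. miae_feasible V E f E'})"
  proof (intro allI impI)
    fix y assume opt: "ip_optimal V E f y"
    let ?Y = "{e\<in>?S. y e = 1}"
    let ?M = "{card (E' - E) | E'. miae_feasible V E f E'}"
    have h: "?Y \<subseteq> ?S" "ip_feasible V E f (indic ?Y)" "ip_objective V E f y = - int (card ?Y)"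
      using F3 opt unfolding ip_optimal_def by auto
    have finM: "finite ?M"
    proof (rule finite_subset)
      show "?M \<subseteq> {..card (Pow V)}"
      proof
        fix m assume "m \<in> ?M"
        then obtain E' where E': "m = card (E' - E)" "miae_feasible V E f E'" by blast
        have "E' - E \<subseteq> Pow V" using E'(2) edges_Pow by (auto simp: miae_feasible_def)
        then show "m \<in> {..card (Pow V)}" using E'(1) fV by (simp add: card_mono)
      qed
    qed simp
    have "Min ?M = card ?Y"
    proof (rule Min_eqI[OF finM])
      have "card ((E \<union> ?Y) - E) \<in> ?M" using F1[OF h(1,2)] by blast
      then show "card ?Y \<in> ?M" unfolding F4[OF h(1)] .
      fix m assume "m \<in> ?M"
      then obtain E' where E': "m = card (E' - E)" "miae_feasible V E f E'" by blast
      obtain Y'' where Y'': "Y'' \<subseteq> ?S" "ip_feasible V E f (indic Y'')" "card Y'' \<le> card (E' - E)"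
        using F2[OF E'(2)] by blast
      have "ip_objective V E f (indic Y'') \<le> ip_objective V E f y"
        using opt Y''(2) unfolding ip_optimal_def by blast
      then have "card ?Y \<le> card Y''" using obj_indic[OF fV Y''(1)] h(3) by simp
      then show "card ?Y \<le> m" using E'(1) Y''(3) by simp
    qed
    then show "ip_objective V E f y = - int (Min ?M)" using h(3) by simp
  qed
  show ?thesis using P1 P2 P3 P4 by blast
qed

end
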